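(* Let $P=\{\mathbf{x}^{(\mathrm{p})}_i\}_{i=1}^{n_{\mathrm p}}$ and $U=\{\mathbf{x}^{(\mathrm{u})}_i\}_{i=1}^{n_{\mathrm u}}$ be finite sets of points in $\mathbb{R}^d$ (positive and unlabeled examples), let $\pi\in(0,1)$, $w_{\mathrm p}=\pi/n_{\mathrm p}$ and $w_{\mathrm u}=1/n_{\mathrm u}$. Let $P'\subseteq P$ and $U'\subseteq U$, not both empty. For a loss $\ell:\mathbb{R}\times\{-1,+1\}\to\mathbb{R}$ define $$\hat R_{\mathrm{uPU}}(v;P',U')=\sum_{\mathbf{x}\in P'}w_{\mathrm p}\,\ell(v,+1)-\sum_{\mathbf{x}\in P'}w_{\mathrm p}\,\ell(v,-1)+\sum_{\mathbf{x}\in U'}w_{\mathrm u}\,\ell(v,-1),$$ and $\hat R^*_{\mathrm{uPU}}(P',U')=\inf_{v\in\mathbb{R}}\hat R_{\mathrm{uPU}}(v;P',U')\in[-\infty,\infty)$. Let $W_{\mathrm p}=|P'|w_{\mathrm p}$, $W_{\mathrm n}=|U'|w_{\mathrm u}-|P'|w_{\mathrm p}$, and $v^*=\frac{W_{\mathrm p}}{W_{\mathrm p}+W_{\mathrm n}}$, where $v^*=+\infty$ if $W_{\mathrm p}+W_{\mathrm n}=0$. (a) For the quadratic loss $\ell(v,y)=(1-vy)^2$: $$\hat R^*_{\mathrm{uPU}}(P',U')=\begin{cases}-\infty,& v^*=+\infty,\\ 4(W_{\mathrm p}+W_{\mathrm n})\,v^*(1-v^* ),&\text{otherwise.}\end{cases}$$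 (b) For the logistic loss $\ell(v,y)=\ln(1+\exp(-vy))$: $$\hat R^*_{\mathrm{uPU}}(P',U')=\begin{cases}(W_{\mathrm p}+W_{\mathrm n})\bigl(-v^*\ln v^*-(1-v^* )\ln(1-v^* )\bigr),& 0<v^*<1,\\ 0,& v^*\in\{0,1\},\\ -\infty,& v^*>1.\end{cases}$$
   Context: This is the unbiased PU (uPU) risk estimate restricted to a node of a decision tree containing positive examples $P'$ and unlabeled examples $U'$, when a constant score $v$ is predicted at that node. *)

theory Defs
  imports "HOL-Analysis.Analysis"
begin

text \<open>Losses l(v,y), with the label y in {-1,+1} represented as a real number.\<close>
definition sq_loss :: "real \<Rightarrow> real \<Rightarrow> real" where
  "sq_loss v y = (1 - v * y)^2"

definition logistic_loss :: "real \<Rightarrow> real \<Rightarrow> real" where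
  "logistic_loss v y = ln (1 + exp (- (v * y)))"

definition w_p :: "real \<Rightarrow> 'a set \<Rightarrow> real" where
  "w_p prior P = prior / real (card P)"

definition w_u :: "'a set \<Rightarrow> real" where
  "w_u U = 1 / real (card U)"

definition uPU_risk ::
  "(real \<Rightarrow> real \<Rightarrow> real) \<Rightarrow> real \<Rightarrow> 'a set \<Rightarrow> 'a set \<Rightarrow> 'a set \<Rightarrow> 'a set \<Rightarrow> real \<Rightarrow> real" where
  "uPU_risk l prior P U P' U' v =
     (\<Sum>x\<in>P'. w_p prior P * l v 1) - (\<Sum>x\<in>P'. w_p prior P * l v (-1))
     + (\<Sum>x\<in>U'. w_u U * l v (-1))"

definition uPU_opt ::
  "(real \<Rightarrow> real \<Rightarrow> real) \<Rightarrow> real \<Rightarrow> 'a set \<Rightarrow> 'a set \<Rightarrow> 'a set \<Rightarrow> 'a set \<Rightarrow> ereal" where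
  "uPU_opt l prior P U P' U' = (INF v::real. ereal (uPU_risk l prior P U P' U' v))"

definition W_p :: "real \<Rightarrow> 'a set \<Rightarrow> 'a set \<Rightarrow> real" where
  "W_p prior P P' = real (card P') * w_p prior P"

definition W_n :: "real \<Rightarrow> 'a set \<Rightarrow> 'a set \<Rightarrow> 'a set \<Rightarrow> 'a set \<Rightarrow> real" where
  "W_n prior P U P' U' = real (card U') * w_u U - real (card P') * w_p prior P"

definition v_star :: "real \<Rightarrow> 'a set \<Rightarrow> 'a set \<Rightarrow> 'a set \<Rightarrow> 'a set \<Rightarrow> ereal" where
  "v_star prior P U P' U' =
     (if W_p prior P P' + W_n prior P U P' U' = 0 then \<infinity>
      else ereal (W_p prior P P' / (W_p prior P P' + W_n prior P U P' U')))"

end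

theory Submission imports Defs begin

lemma inf_attained:
  fixes f :: "real \<Rightarrow> real"
  assumes "\<And>v. m \<le> f v" "f v0 = m"
  shows "(INF v. ereal (f v)) = ereal m"
proof (rule antisym)
  show "(INF v. ereal (f v)) \<le> ereal m" using INF_lower[of v0 UNIV "\<lambda>v. ereal (f v)"] assms(2) by simp
  show "ereal m \<le> (INF v. ereal (f v))" by (rule INF_greatest) (simp add: assms(1))
qed

lemma inf_minf:
  fixes f :: "real \<Rightarrow> real"
  assumes "\<And>B. \<exists>v. f v \<le> B"
  shows "(INF v. ereal (f v)) = -\<infinity>"
proof (rule ereal_bot)
  fix B
  obtain v where "f v \<le> B" using assms by blast
  then show "(INF v. ereal (f v)) \<le> ereal B"
    using INF_lower[of v UNIV "\<lambda>v. ereal (f v)"] by (meson UNIV_I ereal_less_eq(3) order_trans)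
qed

lemma inf_approx:
  fixes f :: "real \<Rightarrow> real"
  assumes "\<And>v. m \<le> f v" "\<And>e. e > 0 \<Longrightarrow> \<exists>v. f v \<le> m + e"
  shows "(INF v. ereal (f v)) = ereal m"
proof (rule antisym)
  show "(INF v. ereal (f v)) \<le> ereal m"
  proof (rule ereal_le_epsilon2)
    fix e :: real assume "0 < e"
    then obtain v where "f v \<le> m + e" using assms(2) by blast
    then show "(INF v. ereal (f v)) \<le> ereal m + ereal e"
      using INF_lower[of v UNIV "\<lambda>v. ereal (f v)"] by (metis UNIV_I ereal_less_eq(3) order_trans plus_ereal.simps(1))
  qed
  show "ereal m \<le> (INF v. ereal (f v))" by (rule INF_greatest) (simp add: assms(1))
qed

lemma linear_minf:
  fixes a c :: real assumes "a > 0" and that: "c > 0"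
  shows "(INF v. ereal (- (c * a * v))) = -\<infinity>"
proof (rule inf_minf)
  fix B
  show "\<exists>v. - (c * a * v) \<le> B"
    by (rule exI[of _ "\<bar>B\<bar> / (c*a)"]) (use assms that in \<open>auto simp: field_simps\<close>)
qed

lemma sq_inf:
  fixes a b :: real
  assumes "a \<ge> 0" "b > 0"
  shows "(INF v. ereal (b*(1+v)^2 - 4 * a * v)) = ereal (4*b*(a/b)*(1-a/b))"
proof (rule inf_attained)
  fix v
  have "b*(1+v)^2 - 4*a*(1+v) + 4*a^2/b = (b*(1+v) - 2*a)^2 / b"
    using assms by (simp add: field_simps power2_eq_square)
  moreover have "(b*(1+v) - 2*a)^2 / b \<ge> 0" using assms by simp
  ultimately show "4*b*(a/b)*(1-a/b) \<le> b*(1+v)^2 - 4 * a * v"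
    using assms by (simp add: field_simps power2_eq_square)
next
  show "b*(1+(2*a/b - 1))^2 - 4*a*(2*a/b - 1) = 4*b*(a/b)*(1-a/b)"
    using assms by (simp add: field_simps power2_eq_square)
qed

lemma log_lower:
  fixes t v :: real
  assumes "0 < t" "t < 1"
  shows "- t * ln t - (1 - t) * ln (1 - t) \<le> - t * v + ln (1 + exp v)"
proof -
  define S where "S = 1 + exp v"
  have S: "S > 0" unfolding S_def by (simp add: add_pos_pos)
  have g: "ln y \<ge> 1 - 1/y" if "y > 0" for y :: real
    using ln_le_minus_one[of "1/y"] that by (simp add: ln_div)
  have 1: "ln (t*S/exp v) \<ge> 1 - exp v/(t*S)" using g[of "t*S/exp v"] assms S by simp
  have 2: "ln ((1-t)*S) \<ge> 1 - 1/((1-t)*S)" using g[of "(1-t)*S"] assms S by simp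
  have "t * ln (t*S/exp v) + (1-t) * ln ((1-t)*S) \<ge> t*(1 - exp v/(t*S)) + (1-t)*(1 - 1/((1-t)*S))"
    using 1 2 assms by (intro add_mono mult_left_mono) auto
  also have "t*(1 - exp v/(t*S)) + (1-t)*(1 - 1/((1-t)*S)) = 0"
  proof -
    have "t*(1 - exp v/(t*S)) + (1-t)*(1 - 1/((1-t)*S)) = 1 - (exp v + 1)/S"
      using assms S by (simp add: field_simps)
    also have "\<dots> = 0" using S by (simp add: S_def)
    finally show ?thesis .
  qed
  finally have "0 \<le> t * ln (t*S/exp v) + (1-t) * ln ((1-t)*S)" .
  also have "t * ln (t*S/exp v) + (1-t) * ln ((1-t)*S) = ln S - t * v + t * ln t + (1-t)*ln(1-t)"
  proof -
    have e1: "ln ((1-t)*S) = ln (1-t) + ln S" using assms S by (simp add: ln_mult)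
    have e2: "ln (t*S/exp v) = ln t + ln S - v" using assms S by (simp add: ln_div ln_mult)
    show ?thesis unfolding e1 e2 by (simp add: algebra_simps)
  qed
  finally show ?thesis unfolding S_def by simp
qed

lemma ln_exp_neg: fixes v :: real shows "ln (1 + exp (- v)) = ln (1 + exp v) - v"
proof -
  have "exp (- v) * exp v = exp (- v + v)" by (rule exp_add[symmetric])
  then have "exp (- v) * exp v = 1" by simp
  then have "1 + exp (- v) = exp (- v) * (1 + exp v)" by (simp add: distrib_left)
  moreover have "0 < 1 + exp v" by (simp add: add_pos_pos)
  ultimately show ?thesis by (simp add: ln_mult)
qed

lemma log_case_mid:
  fixes t b :: real assumes t: "0 < t" "t < 1" and b: "0 < b"
  shows "(INF v. ereal (b * ln (1 + exp v) - b * t * v))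
     = ereal (b * (- t * ln t - (1 - t) * ln (1 - t)))"
  proof (rule inf_attained)
    fix v
    show "b * (- t * ln t - (1 - t) * ln (1 - t)) \<le> b * ln (1 + exp v) - b * t * v"
      using mult_left_mono[OF log_lower[OF t, of v], of b] b by (simp add: algebra_simps)
  next
    define v0 where "v0 = ln t - ln (1 - t)"
    have "exp v0 = t / (1 - t)" using t by (simp add: v0_def exp_diff)
    then have "1 + exp v0 = 1 / (1 - t)" using t by (simp add: field_simps)
    then have "ln (1 + exp v0) = - ln (1 - t)" using t by (simp add: ln_div)
    then show "b * ln (1 + exp v0) - b * t * v0 = b * (- t * ln t - (1 - t) * ln (1 - t))"
      by (simp add: v0_def algebra_simps)
  qed

lemma log_case_zero:
  fixes b :: real assumes "0 < b"
  shows "(INF v. ereal (b * ln (1 + exp v) - 0 * v)) = ereal 0"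
proof (rule inf_approx)
  fix v show "0 \<le> b * ln (1 + exp v) - 0 * v" using assms by simp
next
  fix e :: real assume e: "e > 0"
  have "b * ln (1 + exp (ln (e/b))) \<le> b * exp (ln (e/b))"
    using assms by (intro mult_left_mono ln_add_one_self_le_self) auto
  also have "\<dots> = e" using assms e by simp
  finally show "\<exists>v. b * ln (1 + exp v) - 0 * v \<le> 0 + e" by auto
qed

lemma log_case_one:
  fixes b :: real assumes "0 < b"
  shows "(INF v. ereal (b * ln (1 + exp v) - b * v)) = ereal 0"
proof (rule inf_approx)
  fix v
  have "b * ln (1 + exp v) - b * v = b * ln (1 + exp (- v))" by (simp add: ln_exp_neg algebra_simps)
  then show "0 \<le> b * ln (1 + exp v) - b * v" using assms by simp
next
  fix e :: real assume e: "e > 0"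
  define v where "v = - ln (e/b)"
  have "b * ln (1 + exp v) - b * v = b * ln (1 + exp (- v))" by (simp add: ln_exp_neg algebra_simps)
  also have "\<dots> \<le> b * exp (- v)"
    using assms by (intro mult_left_mono ln_add_one_self_le_self) auto
  also have "\<dots> = e" using assms e by (simp add: v_def)
  finally show "\<exists>v. b * ln (1 + exp v) - b * v \<le> 0 + e" by auto
qed

lemma log_case_big:
  fixes a b :: real assumes "0 \<le> b" "b < a"
  shows "(INF v. ereal (b * ln (1 + exp v) - a * v)) = -\<infinity>"
proof (rule inf_minf)
  fix B :: real
  define v where "v = (\<bar>B\<bar> + b) / (a - b)"
  have v: "v \<ge> 0" using assms by (simp add: v_def)
  have "1 + exp v \<le> exp (1 + v)"
  proof -
    have h1: "1 \<le> exp v" using v by simp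
    have h2: "2 * exp v \<le> exp 1 * exp v"
      using exp_ge_add_one_self[of 1] by (intro mult_right_mono) auto
    have "exp (1 + v) = exp 1 * exp v" by (simp add: exp_add)
    then show ?thesis using h1 h2 by linarith
  qed
  then have "ln (1 + exp v) \<le> 1 + v"
    by (metis add_pos_pos exp_gt_zero ln_exp ln_le_cancel_iff zero_less_one)
  then have "b * ln (1 + exp v) - a * v \<le> b * (1 + v) - a * v"
    using assms by (simp add: mult_left_mono)
  also have "\<dots> = b - (a - b) * v" by (simp add: algebra_simps)
  also have "(a - b) * v = \<bar>B\<bar> + b" using assms by (simp add: v_def)
  finally have "b * ln (1 + exp v) - a * v \<le> B" by linarith
  then show "\<exists>v. b * ln (1 + exp v) - a * v \<le> B" by blast
qed

lemma lin_case:
  fixes a :: real assumes "0 < a"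
  shows "(INF v. ereal (0 * g v - a * v)) = -\<infinity>"
proof (rule inf_minf)
  fix B :: real
  show "\<exists>v. 0 * g v - a * v \<le> B"
    by (rule exI[of _ "\<bar>B\<bar> / a"]) (use assms in auto)
qed

theorem proposition1:
  fixes P U P' U' :: "(real ^ 'd) set" and prior :: real
  assumes "finite P" and "finite U"
    and "P' \<subseteq> P" and "U' \<subseteq> U"
    and "P' \<noteq> {} \<or> U' \<noteq> {}"
    and "0 < prior" and "prior < 1"
  defines "Wp \<equiv> W_p prior P P'" and "Wn \<equiv> W_n prior P U P' U'"
    and "vs \<equiv> v_star prior P U P' U'"
  shows "((vs = \<infinity> \<longrightarrow> uPU_opt sq_loss prior P U P' U' = - \<infinity>)
       \<and> (vs \<noteq> \<infinity> \<longrightarrow> uPU_opt sq_loss prior P U P' U'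
              = ereal (4 * (Wp + Wn) * real_of_ereal vs * (1 - real_of_ereal vs))))
       \<and> ((0 < vs \<and> vs < 1 \<longrightarrow> uPU_opt logistic_loss prior P U P' U'
              = ereal ((Wp + Wn) * (- real_of_ereal vs * ln (real_of_ereal vs)
                         - (1 - real_of_ereal vs) * ln (1 - real_of_ereal vs))))
       \<and> (vs \<in> {0, 1} \<longrightarrow> uPU_opt logistic_loss prior P U P' U' = 0)
       \<and> (vs > 1 \<longrightarrow> uPU_opt logistic_loss prior P U P' U' = - \<infinity>))"
proof -
  define a where "a = Wp"
  define b where "b = Wp + Wn"
  have finP': "finite P'" "finite U'" using assms(1-4) finite_subset by auto
  have a_def': "a = real (card P') * (prior / real (card P))"
    by (simp add: a_def Wp_def W_p_def w_p_def)
  have b_def': "b = real (card U') * (1 / real (card U))"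
    by (simp add: b_def Wp_def Wn_def W_p_def W_n_def w_p_def w_u_def)
  have a0: "a \<ge> 0" using assms(6) by (simp add: a_def')
  have b0: "b \<ge> 0" by (simp add: b_def')
  have bpos: "b = 0 \<Longrightarrow> a > 0"
  proof -
    assume "b = 0"
    then have "U' = {}"
      using finP' assms(2,4) by (auto simp: b_def' card_eq_0_iff dest: finite_subset)
    then have "P' \<noteq> {}" using assms(5) by blast
    then have "card P' > 0" "card P > 0" using finP' assms(1,3)
      by (auto simp: card_gt_0_iff)
    then show "a > 0" using assms(6) by (simp add: a_def')
  qed
  have vs: "vs = (if b = 0 then \<infinity> else ereal (a / b))"
    by (simp add: vs_def v_star_def a_def b_def Wp_def Wn_def)
  have sq: "uPU_opt sq_loss prior P U P' U' = (INF v. ereal (b*(1+v)^2 - 4 * a * v))"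
  proof -
    have "uPU_risk sq_loss prior P U P' U' v = b*(1+v)^2 - 4 * a * v" for v
      by (simp add: uPU_risk_def sq_loss_def a_def' b_def' w_p_def w_u_def power2_eq_square algebra_simps add_divide_distrib diff_divide_distrib)
    then show ?thesis by (simp add: uPU_opt_def)
  qed
  have lg: "uPU_opt logistic_loss prior P U P' U' = (INF v. ereal (b * ln (1 + exp v) - a * v))"
  proof -
    have "uPU_risk logistic_loss prior P U P' U' v = b * ln (1 + exp v) - a * v" for v
      by (simp add: uPU_risk_def logistic_loss_def a_def' b_def' w_p_def w_u_def ln_exp_neg algebra_simps)
    then show ?thesis by (simp add: uPU_opt_def)
  qed
  show ?thesis
  proof (cases "b = 0")
    case True
    then have a: "a > 0" using bpos by simp
    have m: "(INF v. ereal (b*(1+v)^2 - 4 * a * v)) = -\<infinity>"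
      using linear_minf[OF a, of 4] True by simp
    have m2: "(INF v. ereal (b * ln (1 + exp v) - a * v)) = -\<infinity>"
      using lin_case[OF a, of "\<lambda>v. ln (1 + exp v)"] True by simp
    show ?thesis using True m m2 sq lg by (simp add: vs)
  next
    case False
    then have b: "b > 0" using b0 by simp
    have vsr: "vs = ereal (a/b)" "real_of_ereal vs = a / b" using False by (simp_all add: vs)
    have s1: "uPU_opt sq_loss prior P U P' U' = ereal (4 * b * (a/b) * (1 - a/b))"
      using sq sq_inf[OF a0 b] by simp
    have l1: "uPU_opt logistic_loss prior P U P' U'
        = ereal (b * (- (a/b) * ln (a/b) - (1 - a/b) * ln (1 - a/b)))" if "0 < a/b" "a/b < 1"
      using lg log_case_mid[OF that b] b by simp
    have l2: "uPU_opt logistic_loss prior P U P' U' = 0" if "a/b = 0 \<or> a/b = 1"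
    proof -
      have "a = 0 \<or> a = b" using that b by (auto simp: field_simps)
      then show ?thesis using lg log_case_zero[OF b] log_case_one[OF b] by (auto simp: zero_ereal_def)
    qed
    have l3: "uPU_opt logistic_loss prior P U P' U' = -\<infinity>" if "a/b > 1"
    proof -
      have "b < a" using that b by (simp add: field_simps)
      then show ?thesis using lg log_case_big[OF b0] by simp
    qed
    show ?thesis using s1 l1 l2 l3 vsr b_def by (auto simp: zero_ereal_def one_ereal_def)
  qed
qed

end
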